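(* Let $\Sigma$ be a set containing $0$, $(\Gamma,\oplus)$ an abelian group, $n\ge1$, and $K=\{K_1,\ldots,K_k\}$ a partition of $[n]$ into nonempty sets. A function $f:\Sigma^n\to\Gamma$ has $K$-separable arguments if and only if for all $i',i''\in[n]$ lying in different blocks of $K$, all $\bar x\in\Sigma^n$ and all $a',a''\in\Sigma$, $$f(\bar x)\ominus f(\bar x^{[i']}[a'])\ominus f(\bar x^{[i'']}[a''])\oplus f(\bar x^{[i',i'']}[a',a''])=0.$$
   Context: $[n]=\{1,\ldots,n\}$. For $\bar x=(x_1,\ldots,x_n)$, $\bar x^{[i]}[y]$ is $\bar x$ with its $i$th coordinate replaced by $y$, and $\bar x^{[i',i'']}[a',a'']$ is $\bar x$ with coordinates $i',i''$ replaced by $a',a''$. For $L=\{i_1<\cdots<i_m\}\subseteq[n]$, $\bar x_L=(x_{i_1},\ldots,x_{i_m})$. A function $f:\Sigma^n\to\Gamma$ has $K$-separable arguments (for a partition $K=\{K_1,\ldots,K_k\}$ of $[n]$) if there exist functions $f_j:\Sigma^{|K_j|}\to\Gamma$ with $f(\bar x)=f_1(\bar x_{K_1})\oplus\cdots\oplus f_k(\bar x_{K_k})$ for all $\bar x$. *)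

theory Defs
  imports Main "HOL-Library.Disjoint_Sets"
begin

text \<open>Elements of \<Sigma>^n are lists of length n over S; coordinate i (1-based) of xs is xs ! (i - 1).\<close>

definition tuples :: "'a set \<Rightarrow> nat \<Rightarrow> 'a list set" where
  "tuples S n = {xs. length xs = n \<and> set xs \<subseteq> S}"

definition upd1 :: "'a list \<Rightarrow> nat \<Rightarrow> 'a \<Rightarrow> 'a list" where
  "upd1 xs i y = xs[i - 1 := y]"

definition restr :: "'a list \<Rightarrow> nat set \<Rightarrow> 'a list" where
  "restr xs L = nths xs {j. Suc j \<in> L}"

definition separable_args ::
  "'a set \<Rightarrow> nat \<Rightarrow> nat set set \<Rightarrow> ('a list \<Rightarrow> 'b::ab_group_add) \<Rightarrow> bool" where
  "separable_args S n K f \<longleftrightarrow>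
     (\<exists>g :: nat set \<Rightarrow> 'a list \<Rightarrow> 'b.
        (\<forall>xs\<in>tuples S n. f xs = (\<Sum>B\<in>K. g B (restr xs B))))"

end

theory Submission
  imports Defs
begin

definition ov :: "nat \<Rightarrow> nat set \<Rightarrow> 'a list \<Rightarrow> 'a list \<Rightarrow> 'a list" where
  "ov n C u w = map (\<lambda>j. if Suc j \<in> C then w!j else u!j) [0..<n]"

lemma ov_len[simp]: "length (ov n C u w) = n"
  by (simp add: ov_def)

lemma ov_nth[simp]: "j < n \<Longrightarrow> ov n C u w ! j = (if Suc j \<in> C then w!j else u!j)"
  by (simp add: ov_def)

lemma ov_tuples: "u \<in> tuples S n \<Longrightarrow> w \<in> tuples S n \<Longrightarrow> ov n C u w \<in> tuples S n"
  unfolding tuples_def ov_def by (auto dest: nth_mem)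

lemma ov_insert: "i \<in> {1..n} \<Longrightarrow> ov n (insert i C) u w = (ov n C u w)[i-1 := w!(i-1)]"
  by (rule nth_equalityI) (auto simp: nth_list_update)

lemma ov_comm: "C \<inter> D = {} \<Longrightarrow> ov n D (ov n C u p) w = ov n C (ov n D u w) p"
  by (rule nth_equalityI) auto

lemma ov_union: "ov n B (ov n C u w) w = ov n (B \<union> C) u w"
  by (rule nth_equalityI) auto

lemma ov_empty: "length u = n \<Longrightarrow> ov n {} u w = u"
  by (rule nth_equalityI) auto

lemma ov_all: "length x = n \<Longrightarrow> ov n {1..n} u x = x"
  by (rule nth_equalityI) auto

lemma nths_eq_iff:
  "length xs = length ys \<Longrightarrow>
   (nths xs A = nths ys A \<longleftrightarrow> (\<forall>j\<in>A. j < length xs \<longrightarrow> xs!j = ys!j))"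
proof (induction xs arbitrary: ys A)
  case Nil
  then show ?case by simp
next
  case (Cons x xs)
  then obtain y ys' where ys: "ys = y # ys'" "length xs = length ys'"
    by (cases ys) auto
  have "(\<forall>j\<in>A. j < length (x#xs) \<longrightarrow> (x#xs)!j = ys!j) \<longleftrightarrow>
        ((0 \<in> A \<longrightarrow> x = y) \<and> (\<forall>j\<in>{j. Suc j \<in> A}. j < length xs \<longrightarrow> xs!j = ys'!j))"
    unfolding ys
    apply (rule iffI)
     apply (intro conjI impI allI ballI)
      apply force
     apply (drule_tac x="Suc j" in bspec)
      apply simp
     apply (simp add: ys(2))
    apply clarify
    apply (case_tac j)
     apply (auto simp: ys(2))
    done
  moreover have "nths (x#xs) A = nths ys A \<longleftrightarrow>
        ((0 \<in> A \<longrightarrow> x = y) \<and> nths xs {j. Suc j \<in> A} = nths ys' {j. Suc j \<in> A})"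
    unfolding ys by (auto simp: nths_Cons)
  ultimately show ?case using Cons.IH[OF ys(2)] by simp
qed

lemma restr_upd:
  assumes "i \<notin> B" "i \<ge> 1"
  shows "restr (xs[i-1 := a]) B = restr xs B"
  unfolding restr_def using assms
  apply (subst nths_eq_iff)
   apply simp
  apply clarify
  apply (subst nth_list_update_neq)
   apply (cases i)
    apply auto
  done

lemma restr_ov:
  assumes "length x = n" "length y = n" "restr x B = restr y B"
  shows "ov n B u x = ov n B u y"
proof -
  have "\<forall>j\<in>{j. Suc j \<in> B}. j < length x \<longrightarrow> x!j = y!j"
    using assms unfolding restr_def by (subst (asm) nths_eq_iff) auto
  then show ?thesis using assms by (intro nth_equalityI) auto
qed

lemma tele: "(a::'b::ab_group_add) - b = c - d \<Longrightarrow> b - e = d - g \<Longrightarrow> a - e = c - g"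
proof -
  assume h: "a - b = c - d" "b - e = d - g"
  have "a - e = (a - b) + (b - e)" by simp
  also have "\<dots> = (c - d) + (d - g)" using h by simp
  also have "\<dots> = c - g" by simp
  finally show ?thesis .
qed
lemma mix: "(a::'b::ab_group_add) - b - c + d = 0 \<Longrightarrow> b - a = d - c"
proof -
  assume h: "a - b - c + d = 0"
  have "d - c - (b - a) = a - b - c + d" by (simp add: algebra_simps)
  then show ?thesis using h by simp
qed

theorem lemmaA1:
  fixes S :: "'a set" and z :: 'a and n :: nat and K :: "nat set set"
    and f :: "'a list \<Rightarrow> 'b::ab_group_add"
  assumes "z \<in> S"
    and "n \<ge> 1"
    and "partition_on {1..n} K"
  shows "separable_args S n K f \<longleftrightarrow>
    (\<forall>i' i'' B' B''. B' \<in> K \<longrightarrow> B'' \<in> K \<longrightarrow> B' \<noteq> B'' \<longrightarrow> i' \<in> B' \<longrightarrow> i'' \<in> B'' \<longrightarrow>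
      (\<forall>xs\<in>tuples S n. \<forall>a'\<in>S. \<forall>a''\<in>S.
        f xs - f (upd1 xs i' a') - f (upd1 xs i'' a'') + f (upd1 (upd1 xs i' a') i'' a'') = 0))"
    (is "?L \<longleftrightarrow> ?R")
proof -
  have UK: "\<Union>K = {1..n}" using assms(3) partition_onD1 by blast
  have dj: "B1 \<inter> B2 = {}" if "B1 \<in> K" "B2 \<in> K" "B1 \<noteq> B2" for B1 B2
    using assms(3) that unfolding partition_on_def by (meson disjointD)
  have finK: "finite K" using UK by (metis finite_UnionD finite_atLeastAtMost)
  have sub: "B \<subseteq> {1..n}" if "B \<in> K" for B using UK that by blast
  have upd_t: "x[i-1 := a] \<in> tuples S n" if "x \<in> tuples S n" "a \<in> S" for x i a
    using that unfolding tuples_def by (auto dest: set_update_subset_insert[THEN subsetD])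
  show ?thesis
  proof
    assume ?L
    then obtain g where g: "\<forall>xs\<in>tuples S n. f xs = (\<Sum>B\<in>K. g B (restr xs B))"
      unfolding separable_args_def by blast
    show ?R
    proof (intro allI impI ballI)
      fix i' i'' B' B'' xs a' a''
      assume H: "B' \<in> K" "B'' \<in> K" "B' \<noteq> B''" "i' \<in> B'" "i'' \<in> B''" "xs \<in> tuples S n"
        "a' \<in> S" "a'' \<in> S"
      define x1 where "x1 = xs[i'-1 := a']"
      define x2 where "x2 = xs[i''-1 := a'']"
      define x12 where "x12 = x1[i''-1 := a'']"
      have t: "x1 \<in> tuples S n" "x2 \<in> tuples S n" "x12 \<in> tuples S n"
        using H upd_t unfolding x1_def x2_def x12_def by auto
      have i1: "i' \<ge> 1" "i'' \<ge> 1" using H sub by force+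
      have "f xs - f x1 - f x2 + f x12 =
         (\<Sum>B\<in>K. g B (restr xs B) - g B (restr x1 B) - g B (restr x2 B) + g B (restr x12 B))"
        using g H t by (simp add: sum.distrib sum_subtractf)
      also have "\<dots> = 0"
      proof (rule sum.neutral, rule ballI)
        fix B assume B: "B \<in> K"
        show "g B (restr xs B) - g B (restr x1 B) - g B (restr x2 B) + g B (restr x12 B) = 0"
        proof (cases "B = B'")
          case True
          then have "i'' \<notin> B" using dj[OF H(1) H(2) H(3)] H by auto
          then have "restr x2 B = restr xs B" "restr x12 B = restr x1 B"
            unfolding x2_def x12_def using restr_upd i1 by auto
          then show ?thesis by simp
        next
          case False
          then have "i' \<notin> B" using dj[OF H(1) B] H by auto
          moreover have "x12 = x2[i'-1 := a']"
          proof -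
            have "i' \<noteq> i''" using dj[OF H(1) H(2) H(3)] H by auto
            then have "i'-1 \<noteq> i''-1" using i1 by auto
            then show ?thesis unfolding x12_def x1_def x2_def by (simp add: list_update_swap)
          qed
          ultimately have "restr x1 B = restr xs B" "restr x12 B = restr x2 B"
            unfolding x1_def using restr_upd i1 by auto
          then show ?thesis by simp
        qed
      qed
      finally show "f xs - f (upd1 xs i' a') - f (upd1 xs i'' a'') + f (upd1 (upd1 xs i' a') i'' a'') = 0"
        unfolding upd1_def x1_def x2_def x12_def .
    qed
  next
    assume R: ?R
    have A: "f (x[i-1:=a]) - f x = f ((x[j-1:=b])[i-1:=a]) - f (x[j-1:=b])"
      if "B\<in>K" "i\<in>B" "j\<in>{1..n}" "j\<notin>B" "x\<in>tuples S n" "a\<in>S" "b\<in>S" for B i j x a b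
    proof -
      have "j \<in> \<Union>K" using UK that(3) by simp
      then obtain B2 where B2: "B2\<in>K" "j\<in>B2" by (rule UnionE)
      have neq: "B \<noteq> B2" using that(4) B2(2) by blast
      have e: "f x - f (upd1 x i a) - f (upd1 x j b) + f (upd1 (upd1 x i a) j b) = 0"
        by (rule R[rule_format, OF that(1) B2(1) neq that(2) B2(2) that(5) that(6) that(7)])
      have "i \<in> {1..n}" using sub[OF that(1)] that(2) by blast
      moreover have "i \<noteq> j" using that(2,4) by blast
      moreover have "j \<ge> 1" using that(3) by simp
      ultimately have "i - 1 \<noteq> j - 1" by auto
      then have "upd1 (upd1 x i a) j b = (x[j-1:=b])[i-1:=a]"
        unfolding upd1_def by (simp add: list_update_swap)
      with e show ?thesis unfolding upd1_def by (intro mix) simp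
    qed
    have Bst: "finite C \<Longrightarrow> C \<subseteq> {1..n} - B \<Longrightarrow> B\<in>K \<Longrightarrow> i\<in>B \<Longrightarrow> x\<in>tuples S n \<Longrightarrow>
        p \<in> tuples S n \<Longrightarrow> a\<in>S \<Longrightarrow>
        f (x[i-1:=a]) - f x = f ((ov n C x p)[i-1:=a]) - f (ov n C x p)" for C B i x p a
    proof (induction C rule: finite_induct)
      case empty
      then show ?case by (simp add: ov_empty tuples_def)
    next
      case (insert j C)
      have j: "j \<in> {1..n}" "j \<notin> B" using insert by auto
      have pj: "p!(j-1) \<in> S" using insert(8) j unfolding tuples_def by force
      have Cs: "C \<subseteq> {1..n} - B" using insert(4) by blast
      have IH: "f (x[i-1:=a]) - f x = f ((ov n C x p)[i-1:=a]) - f (ov n C x p)"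
        by (rule insert(3)[OF Cs insert(5) insert(6) insert(7) insert(8) insert(9)])
      have E1: "f ((ov n C x p)[i-1:=a]) - f (ov n C x p) =
            f (((ov n C x p)[j-1:=p!(j-1)])[i-1:=a]) - f ((ov n C x p)[j-1:=p!(j-1)])"
        by (rule A[OF insert(5) insert(6) j(1) j(2) ov_tuples[OF insert(7) insert(8)] insert(9) pj])
      show ?case unfolding ov_insert[OF j(1)] using IH E1 by (rule trans)
    qed
    have Cst: "finite D \<Longrightarrow> D \<subseteq> B \<Longrightarrow> B\<in>K \<Longrightarrow> C \<subseteq> {1..n} - B \<Longrightarrow> x\<in>tuples S n \<Longrightarrow>
        w \<in> tuples S n \<Longrightarrow> p \<in> tuples S n \<Longrightarrow>
        f (ov n D x w) - f x = f (ov n D (ov n C x p) w) - f (ov n C x p)" for D B C x w p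
    proof (induction D rule: finite_induct)
      case empty
      then show ?case by (simp add: ov_empty tuples_def)
    next
      case (insert i D)
      define y where "y = ov n D x w"
      have iB: "i \<in> B" using insert(4) by blast
      have i: "i \<in> {1..n}" "i \<in> B" using iB sub[OF insert(5)] by blast+
      have wi: "w!(i-1) \<in> S" using insert(8) i unfolding tuples_def by force
      have fC: "finite C" using insert(6) finite_subset by blast
      have DB: "D \<subseteq> B" using insert(4) by blast
      have CD: "C \<inter> D = {}" using insert(6) DB by blast
      have yt: "y \<in> tuples S n" unfolding y_def by (rule ov_tuples[OF insert(7) insert(8)])
      have e1: "f (y[i-1:=w!(i-1)]) - f y = f ((ov n C y p)[i-1:=w!(i-1)]) - f (ov n C y p)"
        by (rule Bst[OF fC insert(6) insert(5) i(2) yt insert(9) wi])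
      have IH: "f (ov n D x w) - f x = f (ov n D (ov n C x p) w) - f (ov n C x p)"
        by (rule insert(3)[OF DB insert(5) insert(6) insert(7) insert(8) insert(9)])
      have e2: "f y - f x = f (ov n C y p) - f (ov n C x p)"
        using IH unfolding y_def by (simp only: ov_comm[OF CD])
      have e3: "ov n (insert i D) x w = y[i-1:=w!(i-1)]" unfolding y_def by (rule ov_insert[OF i(1)])
      have e4: "ov n (insert i D) (ov n C x p) w = (ov n C y p)[i-1:=w!(i-1)]"
        unfolding y_def by (simp add: ov_insert[OF i(1)] ov_comm[OF CD])
      show ?case unfolding e3 e4 using e1 e2 by (rule tele)
    qed
    define zs where "zs = replicate n z"
    have zt: "zs \<in> tuples S n" unfolding zs_def tuples_def using assms(1) by auto
    have Main: "finite M \<Longrightarrow> M \<subseteq> K \<Longrightarrow> x \<in> tuples S n \<Longrightarrow>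
       f (ov n (\<Union>M) zs x) - f zs = (\<Sum>B\<in>M. f (ov n B zs x) - f zs)" for M x
    proof (induction M rule: finite_induct)
      case empty
      then show ?case by (simp add: ov_empty zs_def)
    next
      case (insert B M)
      have BK: "B \<in> K" using insert by auto
      have sM: "\<Union>M \<subseteq> {1..n} - B"
      proof
        fix j assume "j \<in> \<Union>M"
        then obtain B1 where "B1 \<in> M" "j \<in> B1" by blast
        moreover have "B1 \<in> K" "B1 \<noteq> B" using insert \<open>B1 \<in> M\<close> by auto
        ultimately show "j \<in> {1..n} - B" using dj[OF BK] sub by blast
      qed
      have fB: "finite B" using sub[OF BK] finite_subset by blast
      have e: "f (ov n B zs x) - f zs = f (ov n B (ov n (\<Union>M) zs x) x) - f (ov n (\<Union>M) zs x)"
        by (rule Cst[OF fB subset_refl BK sM zt insert(5) insert(5)])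
      have MK: "M \<subseteq> K" using insert(4) by blast
      have IH: "f (ov n (\<Union>M) zs x) - f zs = (\<Sum>B\<in>M. f (ov n B zs x) - f zs)"
        by (rule insert(3)[OF MK insert(5)])
      have "f (ov n (\<Union>(insert B M)) zs x) - f zs
          = (f (ov n B (ov n (\<Union>M) zs x) x) - f (ov n (\<Union>M) zs x)) + (f (ov n (\<Union>M) zs x) - f zs)"
        by (simp add: ov_union)
      also have "\<dots> = (f (ov n B zs x) - f zs) + (\<Sum>B\<in>M. f (ov n B zs x) - f zs)"
        by (simp only: e IH)
      also have "\<dots> = (\<Sum>B\<in>insert B M. f (ov n B zs x) - f zs)"
        using insert(1,2) by simp
      finally show ?case .
    qed
    obtain B0 where B0: "B0 \<in> K" using UK assms(2) by fastforce
    define g where "g B r = (if B = B0 then f zs else 0) +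
       (f (ov n B zs (SOME y. y \<in> tuples S n \<and> restr y B = r)) - f zs)" for B r
    show ?L unfolding separable_args_def
    proof (intro exI ballI)
      fix xs assume xs: "xs \<in> tuples S n"
      have gB: "g B (restr xs B) = (if B = B0 then f zs else 0) + (f (ov n B zs xs) - f zs)" for B
      proof -
        let ?y = "SOME y. y \<in> tuples S n \<and> restr y B = restr xs B"
        have "?y \<in> tuples S n \<and> restr ?y B = restr xs B" by (rule someI[of _ xs]) (use xs in auto)
        then have "ov n B zs ?y = ov n B zs xs"
          using xs by (intro restr_ov) (auto simp: tuples_def)
        then show ?thesis unfolding g_def by simp
      qed
      have "(\<Sum>B\<in>K. g B (restr xs B)) = f zs + (\<Sum>B\<in>K. f (ov n B zs xs) - f zs)"
        unfolding gB using finK B0 by (simp add: sum.distrib)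
      also have "\<dots> = f (ov n (\<Union>K) zs xs)"
        using Main[OF finK subset_refl xs] by (simp add: algebra_simps)
      also have "\<dots> = f xs" using xs UK ov_all[of xs n zs] by (simp add: tuples_def)
      finally show "f xs = (\<Sum>B\<in>K. g B (restr xs B))" ..
    qed
  qed
qed

end
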